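(* Let $G$ be a countable directed graph and let $x,y\in\mathcal{V}(G)$ with $x\neq y$. For $A\in\mathcal{T}_+(G)$, the coset $A+\mathcal{K}_{x,y}$ belongs to the Jacobson radical $\operatorname{rad}(\mathcal{T}_+(G)/\mathcal{K}_{x,y})$ if and only if $\pi(A)^2=0$ for all $\pi\in\operatorname{rep}_{x,y}(\mathcal{T}_+(G))$.
   Context: A countable directed graph $G$ has countable vertex set $\mathcal{V}(G)$, edge set $\mathcal{E}(G)$, range and source maps $r,s$. The free semigroupoid $\mathbb{F}^+(G)$ consists of vertices and finite paths $w=e_k\cdots e_1$ with $s(e_i)=r(e_{i-1})$, $s(w)=s(e_1)$, $r(w)=r(e_k)$. On $\ell^2(\mathbb{F}^+(G))$ with orthonormal basis $\{\xi_w\}$, $L_e\xi_w=\xi_{ew}$ if $s(e)=r(w)$ and $0$ otherwise, and $P_v$ is the projection onto $\overline{\operatorname{span}}\{\xi_w:r(w)=v\}$. $\mathcal{T}_+(G)$ is the norm-closed operator algebra generated by all $L_e$ and $P_v$. $\mathfrak{M}_{G,x}$ is the set of characters $\rho$ of $\mathcal{T}_+(G)$ with $\rho(P_x)=1$. A two-dimensional nest representation is a continuous homomorphism $\pi$ of $\mathcal{T}_+(G)$ onto $\operatorname{Alg}\mathcal{N}$, the algebra of operators on a 2-dimensional Hilbert space leaving a fixed one-dimensional subspace $N$ invariant; with unit vectors $h_2\in N$, $h_1\in N^\perp$, put $\rho^{(i)}_\pi(A)=\langle\pi(A)h_i,h_i\rangle$. $\operatorname{rep}_{x,y}(\mathcal{T}_+(G))$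 is the set of such $\pi$ with $\rho^{(1)}_\pi\in\mathfrak{M}_{G,x}$, $\rho^{(2)}_\pi\in\mathfrak{M}_{G,y}$, and $\mathcal{K}_{x,y}=\bigcap\{\ker\pi:\pi\in\operatorname{rep}_{x,y}(\mathcal{T}_+(G))\}$, a closed ideal. *)

theory Defs
  imports "HOL-Analysis.Analysis"
begin

text \<open>Elements of the free semigroupoid are encoded as
Inl v (a vertex v) or Inr es, where es = [e_k, ..., e_1] is a nonempty list of
edges (head = last edge traversed), with s(e_i) = r(e_(i-1)).\<close>

type_synonym ('v,'e) fpath = "'v + 'e list"
type_synonym ('v,'e) vecs = "('v,'e) fpath \<Rightarrow> complex"
type_synonym ('v,'e) op = "('v,'e) vecs \<Rightarrow> ('v,'e) vecs"

definition countable_digraph :: "'v set \<Rightarrow> 'e set \<Rightarrow> ('e \<Rightarrow> 'v) \<Rightarrow> ('e \<Rightarrow> 'v) \<Rightarrow> bool" where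
  "countable_digraph V E r s \<longleftrightarrow> countable V \<and> countable E \<and> (\<forall>e\<in>E. r e \<in> V \<and> s e \<in> V)"

definition edge_path :: "'e set \<Rightarrow> ('e \<Rightarrow> 'v) \<Rightarrow> ('e \<Rightarrow> 'v) \<Rightarrow> 'e list \<Rightarrow> bool" where
  "edge_path E r s es \<longleftrightarrow> es \<noteq> [] \<and> set es \<subseteq> E \<and>
     (\<forall>i. Suc i < length es \<longrightarrow> s (es ! i) = r (es ! Suc i))"

definition FP :: "'v set \<Rightarrow> 'e set \<Rightarrow> ('e \<Rightarrow> 'v) \<Rightarrow> ('e \<Rightarrow> 'v) \<Rightarrow> ('v,'e) fpath set" where
  "FP V E r s = Inl ` V \<union> Inr ` {es. edge_path E r s es}"

fun rng :: "('e \<Rightarrow> 'v) \<Rightarrow> ('v,'e) fpath \<Rightarrow> 'v" where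
  "rng r (Inl v) = v"
| "rng r (Inr es) = r (hd es)"

definition l2 :: "'v set \<Rightarrow> 'e set \<Rightarrow> ('e \<Rightarrow> 'v) \<Rightarrow> ('e \<Rightarrow> 'v) \<Rightarrow> ('v,'e) vecs set" where
  "l2 V E r s = {f. (\<forall>w. w \<notin> FP V E r s \<longrightarrow> f w = 0) \<and>
                    (\<lambda>w. (cmod (f w))^2) summable_on UNIV}"

definition l2norm :: "('v,'e) vecs \<Rightarrow> real" where
  "l2norm f = sqrt (\<Sum>\<^sub>\<infinity>w. (cmod (f w))^2)"

text \<open>Bounded operators on l^2(F+(G)); to have canonical representatives an
operator is required to vanish outside l^2.\<close>
definition is_op :: "'v set \<Rightarrow> 'e set \<Rightarrow> ('e \<Rightarrow> 'v) \<Rightarrow> ('e \<Rightarrow> 'v) \<Rightarrow> ('v,'e) op \<Rightarrow> bool" where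
  "is_op V E r s T \<longleftrightarrow>
     (\<forall>f. f \<notin> l2 V E r s \<longrightarrow> T f = (\<lambda>w. 0)) \<and>
     (\<forall>f\<in>l2 V E r s. T f \<in> l2 V E r s) \<and>
     (\<forall>f\<in>l2 V E r s. \<forall>g\<in>l2 V E r s. \<forall>c.
         T (\<lambda>w. f w + c * g w) = (\<lambda>w. T f w + c * T g w)) \<and>
     (\<exists>K. \<forall>f\<in>l2 V E r s. l2norm (T f) \<le> K * l2norm f)"

definition opnorm :: "'v set \<Rightarrow> 'e set \<Rightarrow> ('e \<Rightarrow> 'v) \<Rightarrow> ('e \<Rightarrow> 'v) \<Rightarrow> ('v,'e) op \<Rightarrow> real" where
  "opnorm V E r s T = Sup {l2norm (T f) | f. f \<in> l2 V E r s \<and> l2norm f \<le> 1}"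

definition op_add :: "('v,'e) op \<Rightarrow> ('v,'e) op \<Rightarrow> ('v,'e) op" where
  "op_add T S = (\<lambda>f w. T f w + S f w)"

definition op_sub :: "('v,'e) op \<Rightarrow> ('v,'e) op \<Rightarrow> ('v,'e) op" where
  "op_sub T S = (\<lambda>f w. T f w - S f w)"

definition op_smult :: "complex \<Rightarrow> ('v,'e) op \<Rightarrow> ('v,'e) op" where
  "op_smult c T = (\<lambda>f w. c * T f w)"

text \<open>Coefficients of L_e f: (L_e f)(e w) = f(w) when s(e) = r(w), and 0 at
paths not starting with e.\<close>
fun Lcoef :: "('e \<Rightarrow> 'v) \<Rightarrow> ('e \<Rightarrow> 'v) \<Rightarrow> 'e \<Rightarrow> ('v,'e) vecs \<Rightarrow> ('v,'e) fpath \<Rightarrow> complex" where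
  "Lcoef r s e f (Inr [e']) = (if e' = e then f (Inl (s e)) else 0)"
| "Lcoef r s e f (Inr (e' # e'' # u)) =
     (if e' = e \<and> s e = r e'' then f (Inr (e'' # u)) else 0)"
| "Lcoef r s e f _ = 0"

definition Lop :: "'v set \<Rightarrow> 'e set \<Rightarrow> ('e \<Rightarrow> 'v) \<Rightarrow> ('e \<Rightarrow> 'v) \<Rightarrow> 'e \<Rightarrow> ('v,'e) op" where
  "Lop V E r s e = (\<lambda>f. if f \<in> l2 V E r s then Lcoef r s e f else (\<lambda>w. 0))"

definition Pop :: "'v set \<Rightarrow> 'e set \<Rightarrow> ('e \<Rightarrow> 'v) \<Rightarrow> ('e \<Rightarrow> 'v) \<Rightarrow> 'v \<Rightarrow> ('v,'e) op" where
  "Pop V E r s v = (\<lambda>f. if f \<in> l2 V E r s then (\<lambda>w. if rng r w = v then f w else 0) else (\<lambda>w. 0))"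

inductive_set gen_alg :: "'v set \<Rightarrow> 'e set \<Rightarrow> ('e \<Rightarrow> 'v) \<Rightarrow> ('e \<Rightarrow> 'v) \<Rightarrow> ('v,'e) op set"
  for V E r s where
  gen_L: "e \<in> E \<Longrightarrow> Lop V E r s e \<in> gen_alg V E r s"
| gen_P: "v \<in> V \<Longrightarrow> Pop V E r s v \<in> gen_alg V E r s"
| gen_add: "T \<in> gen_alg V E r s \<Longrightarrow> S \<in> gen_alg V E r s \<Longrightarrow> op_add T S \<in> gen_alg V E r s"
| gen_smult: "T \<in> gen_alg V E r s \<Longrightarrow> op_smult c T \<in> gen_alg V E r s"
| gen_mult: "T \<in> gen_alg V E r s \<Longrightarrow> S \<in> gen_alg V E r s \<Longrightarrow> T \<circ> S \<in> gen_alg V E r s"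

definition Tplus :: "'v set \<Rightarrow> 'e set \<Rightarrow> ('e \<Rightarrow> 'v) \<Rightarrow> ('e \<Rightarrow> 'v) \<Rightarrow> ('v,'e) op set" where
  "Tplus V E r s = {T. is_op V E r s T \<and>
      (\<forall>\<epsilon>>0. \<exists>S\<in>gen_alg V E r s. opnorm V E r s (op_sub T S) < \<epsilon>)}"

definition is_character :: "('v,'e) op set \<Rightarrow> (('v,'e) op \<Rightarrow> complex) \<Rightarrow> bool" where
  "is_character Alg \<rho> \<longleftrightarrow>
     (\<forall>A\<in>Alg. \<forall>B\<in>Alg. \<forall>c. \<rho> (op_add A (op_smult c B)) = \<rho> A + c * \<rho> B) \<and>
     (\<forall>A\<in>Alg. \<forall>B\<in>Alg. \<rho> (A \<circ> B) = \<rho> A * \<rho> B) \<and>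
     (\<exists>A\<in>Alg. \<rho> A \<noteq> 0)"

definition Mchar :: "'v set \<Rightarrow> 'e set \<Rightarrow> ('e \<Rightarrow> 'v) \<Rightarrow> ('e \<Rightarrow> 'v) \<Rightarrow> 'v \<Rightarrow> (('v,'e) op \<Rightarrow> complex) set" where
  "Mchar V E r s x = {\<rho>. is_character (Tplus V E r s) \<rho> \<and> \<rho> (Pop V E r s x) = 1}"

text \<open>Alg N on the 2-dimensional space C^2 with N = span{e_2}, h_2 = e_2 in N,
h_1 = e_1 in N^perp: the operators M with M e_2 in N, i.e. M(1,2) = 0.\<close>
definition AlgN :: "(complex^2^2) set" where
  "AlgN = {M. M $ 1 $ 2 = 0}"

definition nest_rep :: "'v set \<Rightarrow> 'e set \<Rightarrow> ('e \<Rightarrow> 'v) \<Rightarrow> ('e \<Rightarrow> 'v) \<Rightarrow> (('v,'e) op \<Rightarrow> complex^2^2) \<Rightarrow> bool" where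
  "nest_rep V E r s \<pi> \<longleftrightarrow>
     (\<forall>A\<in>Tplus V E r s. \<forall>B\<in>Tplus V E r s. \<forall>c.
        \<pi> (op_add A (op_smult c B)) = \<pi> A + (\<chi> i j. c * \<pi> B $ i $ j)) \<and>
     (\<forall>A\<in>Tplus V E r s. \<forall>B\<in>Tplus V E r s. \<pi> (A \<circ> B) = \<pi> A ** \<pi> B) \<and>
     (\<exists>C. \<forall>A\<in>Tplus V E r s. norm (\<pi> A) \<le> C * opnorm V E r s A) \<and>
     \<pi> ` Tplus V E r s = AlgN"

text \<open>rho^(i)_pi(A) = < pi(A) h_i, h_i > = (i,i) entry.\<close>
definition rho_pi :: "(('v,'e) op \<Rightarrow> complex^2^2) \<Rightarrow> 2 \<Rightarrow> (('v,'e) op \<Rightarrow> complex)" where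
  "rho_pi \<pi> i = (\<lambda>A. \<pi> A $ i $ i)"

definition rep_xy :: "'v set \<Rightarrow> 'e set \<Rightarrow> ('e \<Rightarrow> 'v) \<Rightarrow> ('e \<Rightarrow> 'v) \<Rightarrow> 'v \<Rightarrow> 'v \<Rightarrow> (('v,'e) op \<Rightarrow> complex^2^2) set" where
  "rep_xy V E r s x y = {\<pi>. nest_rep V E r s \<pi> \<and>
      rho_pi \<pi> 1 \<in> Mchar V E r s x \<and> rho_pi \<pi> 2 \<in> Mchar V E r s y}"

definition Kxy :: "'v set \<Rightarrow> 'e set \<Rightarrow> ('e \<Rightarrow> 'v) \<Rightarrow> ('e \<Rightarrow> 'v) \<Rightarrow> 'v \<Rightarrow> 'v \<Rightarrow> ('v,'e) op set" where
  "Kxy V E r s x y = {A \<in> Tplus V E r s. \<forall>\<pi>\<in>rep_xy V E r s x y. \<pi> A = 0}"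

text \<open>Jacobson radical of the quotient algebra Alg/K (Jacobson's elementwise
definition, valid for non-unital algebras): the coset a = A + K lies in the
radical iff for every b = B + K the product b a is left quasi-regular, i.e.
there is c = C + K with c + ba - c(ba) = 0 in Alg/K.\<close>
definition in_rad_quot :: "('v,'e) op set \<Rightarrow> ('v,'e) op set \<Rightarrow> ('v,'e) op \<Rightarrow> bool" where
  "in_rad_quot Alg K A \<longleftrightarrow>
     (\<forall>B\<in>Alg. \<exists>C\<in>Alg. op_sub (op_add C (B \<circ> A)) (C \<circ> (B \<circ> A)) \<in> K)"

end

theory Submission
  imports Defs
begin

lemma l2_zero: "(\<lambda>w. 0) \<in> l2 V E r s"
  unfolding l2_def by simp

lemma l2_summ: "f \<in> l2 V E r s \<Longrightarrow> (\<lambda>w. (cmod (f w))^2) summable_on UNIV"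
  unfolding l2_def by simp

lemma l2_supp: "f \<in> l2 V E r s \<Longrightarrow> w \<notin> FP V E r s \<Longrightarrow> f w = 0"
  unfolding l2_def by simp

lemma l2_fin_le:
  assumes "f \<in> l2 V E r s" "finite F"
  shows "(\<Sum>w\<in>F. (cmod (f w))^2) \<le> (\<Sum>\<^sub>\<infinity>w. (cmod (f w))^2)"
  by (rule finite_sum_le_infsum) (use l2_summ[OF assms(1)] assms(2) in auto)

lemma l2norm_nonneg: "l2norm f \<ge> 0"
  unfolding l2norm_def by (simp add: infsum_nonneg)

lemma l2_by_fin:
  assumes supp: "\<And>w. w \<notin> FP V E r s \<Longrightarrow> g w = 0"
    and fin: "\<And>F. finite F \<Longrightarrow> (\<Sum>w\<in>F. (cmod (g w))^2) \<le> K"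
  shows "g \<in> l2 V E r s" "l2norm g \<le> sqrt K"
proof -
  have sm: "(\<lambda>w. (cmod (g w))^2) summable_on UNIV"
    by (rule nonneg_bdd_above_summable_on) (auto intro!: bdd_aboveI[where M=K] fin)
  then show "g \<in> l2 V E r s" unfolding l2_def using supp by auto
  have "(\<Sum>\<^sub>\<infinity>w. (cmod (g w))^2) \<le> K"
    by (rule infsum_le_finite_sums[OF sm]) (use fin in auto)
  then show "l2norm g \<le> sqrt K" unfolding l2norm_def by simp
qed

lemma L2_le_l2norm:
  assumes "f \<in> l2 V E r s" "finite F"
  shows "L2_set (\<lambda>w. cmod (f w)) F \<le> l2norm f"
  unfolding L2_set_def l2norm_def using l2_fin_le[OF assms] by simp

lemma l2_comb:
  assumes f: "f \<in> l2 V E r s" and g: "g \<in> l2 V E r s"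
  shows "(\<lambda>w. f w + c * g w) \<in> l2 V E r s"
    "l2norm (\<lambda>w. f w + c * g w) \<le> l2norm f + cmod c * l2norm g"
proof -
  have supp: "(\<lambda>w. f w + c * g w) w = 0" if "w \<notin> FP V E r s" for w
    using l2_supp[OF f that] l2_supp[OF g that] by simp
  have fin: "(\<Sum>w\<in>F. (cmod ((\<lambda>w. f w + c * g w) w))^2) \<le> (l2norm f + cmod c * l2norm g)^2"
    if F: "finite F" for F
  proof -
    have "L2_set (\<lambda>w. cmod (f w + c * g w)) F \<le> L2_set (\<lambda>w. cmod (f w) + cmod c * cmod (g w)) F"
      by (rule L2_set_mono) (auto intro: order_trans[OF norm_triangle_ineq] simp: norm_mult)
    also have "\<dots> \<le> L2_set (\<lambda>w. cmod (f w)) F + L2_set (\<lambda>w. cmod c * cmod (g w)) F"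
      by (rule L2_set_triangle_ineq)
    also have "\<dots> = L2_set (\<lambda>w. cmod (f w)) F + cmod c * L2_set (\<lambda>w. cmod (g w)) F"
      by (simp add: L2_set_right_distrib)
    also have "\<dots> \<le> l2norm f + cmod c * l2norm g"
      using L2_le_l2norm[OF f F] L2_le_l2norm[OF g F] by (simp add: add_mono mult_left_mono)
    finally have *: "sqrt (\<Sum>w\<in>F. (cmod (f w + c * g w))^2) \<le> l2norm f + cmod c * l2norm g"
      unfolding L2_set_def by simp
    have "0 \<le> (\<Sum>w\<in>F. (cmod (f w + c * g w))^2)" by (simp add: sum_nonneg)
    then show ?thesis using * by (simp add: real_sqrt_le_iff sqrt_le_D)
  qed
  show "(\<lambda>w. f w + c * g w) \<in> l2 V E r s" by (rule l2_by_fin[OF supp fin]) auto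
  have "l2norm (\<lambda>w. f w + c * g w) \<le> sqrt ((l2norm f + cmod c * l2norm g)^2)"
    by (rule l2_by_fin[OF supp fin]) auto
  also have "\<dots> = l2norm f + cmod c * l2norm g" by (simp add: l2norm_nonneg)
  finally show "l2norm (\<lambda>w. f w + c * g w) \<le> l2norm f + cmod c * l2norm g" .
qed

lemma l2norm_zero_iff:
  assumes "f \<in> l2 V E r s" "l2norm f = 0"
  shows "f = (\<lambda>w. 0)"
proof
  fix w
  have "(\<Sum>w\<in>{w}. (cmod (f w))^2) \<le> (\<Sum>\<^sub>\<infinity>w. (cmod (f w))^2)" by (rule l2_fin_le[OF assms(1)]) simp
  moreover have "(\<Sum>\<^sub>\<infinity>w. (cmod (f w))^2) = 0" using assms(2) unfolding l2norm_def
    by (simp add: infsum_nonneg)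
  ultimately show "f w = 0" by simp
qed

lemma l2norm_0: "l2norm (\<lambda>w. 0) = 0" unfolding l2norm_def by simp

lemma l2_scale:
  assumes f: "f \<in> l2 V E r s"
  shows "(\<lambda>w. c * f w) \<in> l2 V E r s" "l2norm (\<lambda>w. c * f w) \<le> cmod c * l2norm f"
  using l2_comb[OF l2_zero f, of c] by (simp_all add: l2norm_0)

lemma op_off: "is_op V E r s T \<Longrightarrow> f \<notin> l2 V E r s \<Longrightarrow> T f = (\<lambda>w. 0)"
  unfolding is_op_def by blast
lemma op_l2: "is_op V E r s T \<Longrightarrow> f \<in> l2 V E r s \<Longrightarrow> T f \<in> l2 V E r s"
  unfolding is_op_def by blast
lemma op_lin: "is_op V E r s T \<Longrightarrow> f \<in> l2 V E r s \<Longrightarrow> g \<in> l2 V E r s \<Longrightarrow>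
   T (\<lambda>w. f w + c * g w) = (\<lambda>w. T f w + c * T g w)"
  unfolding is_op_def by blast
lemma op_zero: assumes "is_op V E r s T" shows "T (\<lambda>w. 0) = (\<lambda>w. 0)"
proof -
  have "T (\<lambda>w. (\<lambda>w. 0) w + 1 * (\<lambda>w. 0) w) = (\<lambda>w. T (\<lambda>w. 0) w + 1 * T (\<lambda>w. 0) w)"
    by (rule op_lin[OF assms l2_zero l2_zero])
  then have "T (\<lambda>w. 0) = (\<lambda>w. T (\<lambda>w. 0) w + T (\<lambda>w. 0) w)" by simp
  then show ?thesis by (metis add_cancel_right_right)
qed
lemma op_bounded: assumes "is_op V E r s T" shows "\<exists>K\<ge>0. \<forall>f\<in>l2 V E r s. l2norm (T f) \<le> K * l2norm f"
proof -
  obtain K where K: "\<forall>f\<in>l2 V E r s. l2norm (T f) \<le> K * l2norm f" using assms unfolding is_op_def by blast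
  have "\<forall>f\<in>l2 V E r s. l2norm (T f) \<le> max K 0 * l2norm f"
    using K by (metis l2norm_nonneg max.cobounded1 mult_right_mono order_trans)
  then show ?thesis by (intro exI[of _ "max K 0"]) auto
qed

lemma opnorm_le:
  assumes "\<And>f. f \<in> l2 V E r s \<Longrightarrow> l2norm (T f) \<le> K * l2norm f" "0 \<le> K"
  shows "opnorm V E r s T \<le> K"
  unfolding opnorm_def
proof (rule cSup_least)
  have "l2norm (T (\<lambda>w. 0)) \<in> {l2norm (T f) |f. f \<in> l2 V E r s \<and> l2norm f \<le> 1}"
    by (intro CollectI exI[of _ "\<lambda>w. 0"]) (simp add: l2_zero l2norm_0)
  then show "{l2norm (T f) |f. f \<in> l2 V E r s \<and> l2norm f \<le> 1} \<noteq> {}" by blast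
  fix x assume "x \<in> {l2norm (T f) |f. f \<in> l2 V E r s \<and> l2norm f \<le> 1}"
  then obtain f where f: "f \<in> l2 V E r s" "l2norm f \<le> 1" "x = l2norm (T f)" by blast
  have "x \<le> K * l2norm f" using assms(1) f by simp
  also have "\<dots> \<le> K" using f(2) assms(2) by (simp add: mult_left_le)
  finally show "x \<le> K" .
qed

lemma opnorm_upper:
  assumes "is_op V E r s T" "f \<in> l2 V E r s" "l2norm f \<le> 1"
  shows "l2norm (T f) \<le> opnorm V E r s T"
  unfolding opnorm_def
proof (rule cSup_upper)
  show "l2norm (T f) \<in> {l2norm (T f) |f. f \<in> l2 V E r s \<and> l2norm f \<le> 1}" using assms by blast
  obtain K where K: "K \<ge> 0" "\<forall>f\<in>l2 V E r s. l2norm (T f) \<le> K * l2norm f" using op_bounded[OF assms(1)] by blast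
  show "bdd_above {l2norm (T f) |f. f \<in> l2 V E r s \<and> l2norm f \<le> 1}"
  proof (rule bdd_aboveI[where M=K], clarify)
    fix g assume "g \<in> l2 V E r s" "l2norm g \<le> 1"
    then show "l2norm (T g) \<le> K" using K by (meson mult_left_le order_trans)
  qed
qed

lemma opnorm_nonneg: assumes "is_op V E r s T" shows "0 \<le> opnorm V E r s T"
  using opnorm_upper[OF assms l2_zero] l2norm_nonneg l2norm_0 by (metis order_trans zero_less_one_class.zero_le_one)

lemma opnorm_bound:
  assumes T: "is_op V E r s T" and f: "f \<in> l2 V E r s"
  shows "l2norm (T f) \<le> opnorm V E r s T * l2norm f"
proof (cases "l2norm f = 0")
  case True
  then have "f = (\<lambda>w. 0)" using l2norm_zero_iff[OF f] by simp
  then show ?thesis using op_zero[OF T] True l2norm_0 by simp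
next
  case False
  define n where "n = l2norm f"
  have n: "n > 0" using False l2norm_nonneg[of f] n_def by simp
  define g where "g = (\<lambda>w. complex_of_real (1/n) * f w)"
  have g: "g \<in> l2 V E r s" unfolding g_def by (rule l2_scale[OF f])
  have "l2norm g \<le> cmod (complex_of_real (1/n)) * l2norm f"
    unfolding g_def by (rule l2_scale[OF f])
  also have "\<dots> = 1" using n by (simp add: n_def[symmetric] norm_divide)
  finally have g1: "l2norm (T g) \<le> opnorm V E r s T" using opnorm_upper[OF T g] by simp
  have Tg: "T g = (\<lambda>w. T (\<lambda>w. 0) w + complex_of_real (1/n) * T f w)"
    using op_lin[OF T l2_zero f, of "complex_of_real (1/n)"] unfolding g_def by simp
  have "T f = (\<lambda>w. complex_of_real n * T g w)"
    using n by (auto simp: Tg op_zero[OF T])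
  then have "l2norm (T f) \<le> cmod (complex_of_real n) * l2norm (T g)"
    using l2_scale(2)[OF op_l2[OF T g], of "complex_of_real n"] by simp
  also have "\<dots> \<le> n * opnorm V E r s T" using n g1 by simp
  finally show ?thesis by (simp add: n_def mult.commute)
qed

lemma is_op_comb:
  assumes X: "is_op V E r s X" and Y: "is_op V E r s Y"
  shows "is_op V E r s (\<lambda>f w. X f w + c * Y f w)"
    "opnorm V E r s (\<lambda>f w. X f w + c * Y f w) \<le> opnorm V E r s X + cmod c * opnorm V E r s Y"
proof -
  have bd: "l2norm (\<lambda>w. X f w + c * Y f w) \<le> (opnorm V E r s X + cmod c * opnorm V E r s Y) * l2norm f"
    if f: "f \<in> l2 V E r s" for f
  proof -
    have "l2norm (\<lambda>w. X f w + c * Y f w) \<le> l2norm (X f) + cmod c * l2norm (Y f)"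
      by (rule l2_comb[OF op_l2[OF X f] op_l2[OF Y f]])
    also have "\<dots> \<le> opnorm V E r s X * l2norm f + cmod c * (opnorm V E r s Y * l2norm f)"
      by (intro add_mono mult_left_mono opnorm_bound X Y f) auto
    finally show ?thesis by (simp add: algebra_simps)
  qed
  have nn: "0 \<le> opnorm V E r s X + cmod c * opnorm V E r s Y"
    using opnorm_nonneg[OF X] opnorm_nonneg[OF Y] by simp
  show "opnorm V E r s (\<lambda>f w. X f w + c * Y f w) \<le> opnorm V E r s X + cmod c * opnorm V E r s Y"
    by (rule opnorm_le[OF bd nn])
  show "is_op V E r s (\<lambda>f w. X f w + c * Y f w)"
    unfolding is_op_def
  proof (intro conjI allI ballI impI)
    fix f assume "f \<notin> l2 V E r s"
    then show "(\<lambda>w. X f w + c * Y f w) = (\<lambda>w. 0)" using op_off[OF X] op_off[OF Y] by simp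
  next
    fix f assume "f \<in> l2 V E r s"
    then show "(\<lambda>w. X f w + c * Y f w) \<in> l2 V E r s" by (intro l2_comb op_l2[OF X] op_l2[OF Y])
  next
    fix f g d assume f: "f \<in> l2 V E r s" and g: "g \<in> l2 V E r s"
    show "(\<lambda>w. X (\<lambda>w. f w + d * g w) w + c * Y (\<lambda>w. f w + d * g w) w) =
        (\<lambda>w. (X f w + c * Y f w) + d * (X g w + c * Y g w))"
      by (simp add: op_lin[OF X f g] op_lin[OF Y f g] algebra_simps)
  next
    show "\<exists>K. \<forall>f\<in>l2 V E r s. l2norm (\<lambda>w. X f w + c * Y f w) \<le> K * l2norm f"
      using bd by blast
  qed
qed

lemma is_op_comp:
  assumes T: "is_op V E r s T" and S: "is_op V E r s S"
  shows "is_op V E r s (T \<circ> S)"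
  unfolding is_op_def
proof (intro conjI allI ballI impI)
  fix f assume "f \<notin> l2 V E r s"
  then show "(T \<circ> S) f = (\<lambda>w. 0)" using op_off[OF S] op_zero[OF T] by simp
next
  fix f assume "f \<in> l2 V E r s"
  then show "(T \<circ> S) f \<in> l2 V E r s" by (simp add: op_l2[OF T] op_l2[OF S])
next
  fix f g d assume f: "f \<in> l2 V E r s" and g: "g \<in> l2 V E r s"
  show "(T \<circ> S) (\<lambda>w. f w + d * g w) = (\<lambda>w. (T \<circ> S) f w + d * (T \<circ> S) g w)"
    by (simp add: op_lin[OF S f g] op_lin[OF T op_l2[OF S f] op_l2[OF S g]])
next
  show "\<exists>K. \<forall>f\<in>l2 V E r s. l2norm ((T \<circ> S) f) \<le> K * l2norm f"
  proof (intro exI ballI)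
    fix f assume f: "f \<in> l2 V E r s"
    have "l2norm (T (S f)) \<le> opnorm V E r s T * l2norm (S f)" by (rule opnorm_bound[OF T op_l2[OF S f]])
    also have "\<dots> \<le> opnorm V E r s T * (opnorm V E r s S * l2norm f)"
      by (intro mult_left_mono opnorm_bound[OF S f] opnorm_nonneg[OF T])
    finally show "l2norm ((T \<circ> S) f) \<le> (opnorm V E r s T * opnorm V E r s S) * l2norm f" by simp
  qed
qed

lemma FP_Inr: "Inr es \<in> FP V E r s \<longleftrightarrow> edge_path E r s es"
  unfolding FP_def by auto

lemma edge_path_cons:
  assumes "edge_path E r s es" "e \<in> E" "s e = r (hd es)"
  shows "edge_path E r s (e # es)"
  unfolding edge_path_def
proof (intro conjI allI impI)
  show "set (e # es) \<subseteq> E" using assms unfolding edge_path_def by auto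
  fix i assume i: "Suc i < length (e # es)"
  show "s ((e # es) ! i) = r ((e # es) ! Suc i)"
  proof (cases i)
    case 0
    then show ?thesis using assms by (simp add: edge_path_def hd_conv_nth)
  next
    case (Suc j)
    then show ?thesis using assms i unfolding edge_path_def by simp
  qed
qed simp

lemma Pop_is_op: "is_op V E r s (Pop V E r s v)"
proof -
  have key: "(\<lambda>w. if rng r w = v then f w else 0) \<in> l2 V E r s \<and>
     l2norm (\<lambda>w. if rng r w = v then f w else 0) \<le> 1 * l2norm f" if f: "f \<in> l2 V E r s" for f
  proof -
    have fin: "(\<Sum>w\<in>F. (cmod (if rng r w = v then f w else 0))^2) \<le> (\<Sum>\<^sub>\<infinity>w. (cmod (f w))^2)"
      if "finite F" for F
      by (rule order_trans[OF sum_mono l2_fin_le[OF f that]]) auto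
    have "(\<lambda>w. if rng r w = v then f w else 0) \<in> l2 V E r s"
      by (rule l2_by_fin(1)[where V=V and E=E and r=r and s=s, OF _ fin]) (auto simp: l2_supp[OF f])
    moreover have "l2norm (\<lambda>w. if rng r w = v then f w else 0) \<le> sqrt (\<Sum>\<^sub>\<infinity>w. (cmod (f w))^2)"
      by (rule l2_by_fin(2)[where V=V and E=E and r=r and s=s, OF _ fin]) (auto simp: l2_supp[OF f])
    moreover have "l2norm (\<lambda>w. if rng r w = v then f w else 0) \<le> l2norm f"
      using calculation(2) unfolding l2norm_def by simp
    ultimately show ?thesis by simp
  qed
  show ?thesis
    unfolding is_op_def Pop_def
  proof (intro conjI allI ballI impI)
    fix f g c assume f: "f \<in> l2 V E r s" and g: "g \<in> l2 V E r s"
    then show "(if (\<lambda>w. f w + c * g w) \<in> l2 V E r s then \<lambda>w. if rng r w = v then f w + c * g w else 0 else (\<lambda>w. 0)) =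
       (\<lambda>w. (if f \<in> l2 V E r s then \<lambda>w. if rng r w = v then f w else 0 else (\<lambda>w. 0)) w +
          c * (if g \<in> l2 V E r s then \<lambda>w. if rng r w = v then g w else 0 else (\<lambda>w. 0)) w)"
      using l2_comb(1)[OF f g] by auto
  qed (use key in \<open>auto intro!: exI[of _ 1]\<close>)
qed

definition psi :: "('e \<Rightarrow> 'v) \<Rightarrow> 'e \<Rightarrow> ('v,'e) fpath \<Rightarrow> ('v,'e) fpath" where
  "psi s e w = (if tl (projr w) = [] then Inl (s e) else Inr (tl (projr w)))"

lemma Lcoef_lin: "Lcoef r s e (\<lambda>w. f w + c * g w) w = Lcoef r s e f w + c * Lcoef r s e g w"
proof (cases w)
  case (Inr es)
  then show ?thesis
  proof (cases es)
    case (Cons a rest)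
    then show ?thesis using Inr by (cases rest) auto
  qed auto
qed auto

lemma Lcoef_W: "Lcoef r s e f w \<noteq> 0 \<Longrightarrow> \<exists>rest. w = Inr (e # rest)"
proof (cases w)
  case (Inr es)
  assume "Lcoef r s e f w \<noteq> 0"
  then show ?thesis using Inr
  proof (cases es)
    case (Cons a rest)
    then show ?thesis using Inr \<open>Lcoef r s e f w \<noteq> 0\<close> by (cases rest) (auto split: if_splits)
  qed auto
qed auto

lemma Lcoef_notW: "w \<notin> {w. \<exists>rest. w = Inr (e # rest)} \<Longrightarrow> Lcoef r s e f w = 0"
  by (metis (mono_tags, lifting) Lcoef_W mem_Collect_eq)

lemma Lcoef_psi: "cmod (Lcoef r s e f (Inr (e # rest))) \<le> cmod (f (psi s e (Inr (e # rest))))"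
  by (cases rest) (auto simp: psi_def)

lemma psi_inj: "inj_on (psi s e) {w. \<exists>rest. w = Inr (e # rest)}"
  by (auto simp: inj_on_def psi_def split: if_splits)

lemma Lcoef_supp:
  assumes f: "f \<in> l2 V E r s" and e: "e \<in> E" and w: "w \<notin> FP V E r s"
  shows "Lcoef r s e f w = 0"
proof (rule ccontr)
  assume nz: "Lcoef r s e f w \<noteq> 0"
  obtain rest where w': "w = Inr (e # rest)" using Lcoef_W[OF nz] by blast
  show False
  proof (cases rest)
    case Nil
    then have "edge_path E r s [e]" using e by (simp add: edge_path_def)
    then show False using w w' Nil by (simp add: FP_Inr)
  next
    case (Cons e'' u)
    from nz have h: "s e = r e'' \<and> f (Inr rest) \<noteq> 0" unfolding w' Cons by (simp split: if_splits)
    then have "edge_path E r s rest" using l2_supp[OF f, of "Inr rest"] by (auto simp: FP_Inr)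
    then have "edge_path E r s (e # rest)" by (rule edge_path_cons[OF _ e]) (simp add: Cons h)
    then show False using w w' by (simp add: FP_Inr)
  qed
qed

lemma Lcoef_l2:
  assumes f: "f \<in> l2 V E r s" and e: "e \<in> E"
  shows "Lcoef r s e f \<in> l2 V E r s" "l2norm (Lcoef r s e f) \<le> l2norm f"
proof -
  let ?W = "{w. \<exists>rest. w = Inr (e # rest)}"
  have fin: "(\<Sum>w\<in>F. (cmod (Lcoef r s e f w))^2) \<le> (\<Sum>\<^sub>\<infinity>w. (cmod (f w))^2)" if F: "finite F" for F
  proof -
    have "(\<Sum>w\<in>F. (cmod (Lcoef r s e f w))^2) = (\<Sum>w\<in>F \<inter> ?W. (cmod (Lcoef r s e f w))^2)"
      by (rule sum.mono_neutral_right) (use F in \<open>auto dest: Lcoef_W\<close>)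
    also have "\<dots> \<le> (\<Sum>w\<in>F \<inter> ?W. (cmod (f (psi s e w)))^2)"
      by (rule sum_mono) (auto intro!: power_mono Lcoef_psi)
    also have "\<dots> = (\<Sum>u\<in>psi s e ` (F \<inter> ?W). (cmod (f u))^2)"
      by (rule sum.reindex[symmetric, unfolded comp_def]) (rule inj_on_subset[OF psi_inj], auto)
    also have "\<dots> \<le> (\<Sum>\<^sub>\<infinity>w. (cmod (f w))^2)" by (rule l2_fin_le[OF f]) (use F in auto)
    finally show ?thesis .
  qed
  show "Lcoef r s e f \<in> l2 V E r s" by (rule l2_by_fin(1)[where V=V and E=E and r=r and s=s, OF _ fin]) (auto simp: Lcoef_supp[OF f e])
  have "l2norm (Lcoef r s e f) \<le> sqrt (\<Sum>\<^sub>\<infinity>w. (cmod (f w))^2)"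
    by (rule l2_by_fin(2)[where V=V and E=E and r=r and s=s, OF _ fin]) (auto simp: Lcoef_supp[OF f e])
  then show "l2norm (Lcoef r s e f) \<le> l2norm f" unfolding l2norm_def by simp
qed

lemma Lop_is_op: assumes e: "e \<in> E" shows "is_op V E r s (Lop V E r s e)"
  unfolding is_op_def Lop_def
proof (intro conjI allI ballI impI)
  fix f g c assume f: "f \<in> l2 V E r s" and g: "g \<in> l2 V E r s"
  then show "(if (\<lambda>w. f w + c * g w) \<in> l2 V E r s then Lcoef r s e (\<lambda>w. f w + c * g w) else (\<lambda>w. 0)) =
       (\<lambda>w. (if f \<in> l2 V E r s then Lcoef r s e f else (\<lambda>w. 0)) w +
          c * (if g \<in> l2 V E r s then Lcoef r s e g else (\<lambda>w. 0)) w)"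
    using l2_comb(1)[OF f g] by (auto simp: Lcoef_lin)
qed (use Lcoef_l2[OF _ e] in \<open>auto intro!: exI[of _ 1]\<close>)

lemma gen_is_op: "T \<in> gen_alg V E r s \<Longrightarrow> is_op V E r s T"
proof (induction rule: gen_alg.induct)
  case (gen_L e) then show ?case by (rule Lop_is_op)
next
  case (gen_P v) show ?case by (rule Pop_is_op)
next
  case (gen_add T S)
  have eq: "op_add T S = (\<lambda>f w. T f w + 1 * S f w)" by (simp add: op_add_def)
  show ?case unfolding eq by (rule is_op_comb(1)[OF gen_add.IH])
next
  case (gen_smult T c)
  have eq: "op_smult c T = (\<lambda>f w. T f w + (c - 1) * T f w)" by (auto simp: op_smult_def algebra_simps)
  show ?case unfolding eq by (rule is_op_comb(1)[OF gen_smult.IH gen_smult.IH])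
next
  case (gen_mult T S) show ?case by (rule is_op_comp[OF gen_mult.IH])
qed


lemma Tplus_op: "T \<in> Tplus V E r s \<Longrightarrow> is_op V E r s T"
  unfolding Tplus_def by blast
lemma Tplus_approx: "T \<in> Tplus V E r s \<Longrightarrow> \<epsilon> > 0 \<Longrightarrow> \<exists>S\<in>gen_alg V E r s. opnorm V E r s (op_sub T S) < \<epsilon>"
  unfolding Tplus_def by blast

lemma op_sub_eq: "op_sub X Y = (\<lambda>f w. X f w + (-1) * Y f w)"
  by (simp add: op_sub_def)

lemma op_sub_is_op: "is_op V E r s X \<Longrightarrow> is_op V E r s Y \<Longrightarrow> is_op V E r s (op_sub X Y)"
  unfolding op_sub_eq by (rule is_op_comb(1))

lemma Tplus_comb:
  assumes X: "X \<in> Tplus V E r s" and Y: "Y \<in> Tplus V E r s"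
  shows "(\<lambda>f w. X f w + c * Y f w) \<in> Tplus V E r s"
proof -
  have Xo: "is_op V E r s X" and Yo: "is_op V E r s Y" using X Y by (simp_all add: Tplus_op)
  have "\<exists>S\<in>gen_alg V E r s. opnorm V E r s (op_sub (\<lambda>f w. X f w + c * Y f w) S) < \<epsilon>"
    if e: "\<epsilon> > 0" for \<epsilon>
  proof -
    define \<delta> where "\<delta> = \<epsilon> / (2 * (1 + cmod c))"
    have d: "\<delta> > 0" using e by (simp add: \<delta>_def add_pos_nonneg)
    obtain X' where X': "X' \<in> gen_alg V E r s" "opnorm V E r s (op_sub X X') < \<delta>"
      using Tplus_approx[OF X d] by blast
    obtain Y' where Y': "Y' \<in> gen_alg V E r s" "opnorm V E r s (op_sub Y Y') < \<delta>"
      using Tplus_approx[OF Y d] by blast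
    have G: "op_add X' (op_smult c Y') \<in> gen_alg V E r s"
      by (intro gen_alg.gen_add gen_alg.gen_smult X' Y')
    have eq: "op_sub (\<lambda>f w. X f w + c * Y f w) (op_add X' (op_smult c Y')) =
        (\<lambda>f w. op_sub X X' f w + c * op_sub Y Y' f w)"
      by (auto simp: op_sub_def op_add_def op_smult_def algebra_simps)
    have "opnorm V E r s (\<lambda>f w. op_sub X X' f w + c * op_sub Y Y' f w)
        \<le> opnorm V E r s (op_sub X X') + cmod c * opnorm V E r s (op_sub Y Y')"
      by (rule is_op_comb(2)[OF op_sub_is_op[OF Xo gen_is_op[OF X'(1)]] op_sub_is_op[OF Yo gen_is_op[OF Y'(1)]]])
    also have "\<dots> \<le> \<delta> + cmod c * \<delta>"
      by (rule add_mono[OF less_imp_le[OF X'(2)] mult_left_mono[OF less_imp_le[OF Y'(2)] norm_ge_zero]])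
    also have "\<dots> = \<delta> * (1 + cmod c)" by (simp add: algebra_simps)
    also have "\<dots> = \<epsilon> / 2"
    proof -
      have p: "1 + cmod c \<noteq> 0" by (metis add_pos_nonneg norm_ge_zero zero_less_one less_irrefl)
      show ?thesis unfolding \<delta>_def using p by (simp add: divide_simps)
    qed
    also have "\<dots> < \<epsilon>" using e by simp
    finally have "opnorm V E r s (op_sub (\<lambda>f w. X f w + c * Y f w) (op_add X' (op_smult c Y'))) < \<epsilon>"
      by (simp only: eq)
    then show ?thesis using G by blast
  qed
  then show ?thesis unfolding Tplus_def mem_Collect_eq by (intro conjI is_op_comb(1)[OF Xo Yo]) auto
qed

lemma Tplus_comp:
  assumes T: "T \<in> Tplus V E r s" and S: "S \<in> Tplus V E r s"
  shows "T \<circ> S \<in> Tplus V E r s"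
proof -
  have To: "is_op V E r s T" and So: "is_op V E r s S" using T S by (simp_all add: Tplus_op)
  let ?a = "opnorm V E r s T" and ?b = "opnorm V E r s S"
  have a0: "?a \<ge> 0" using opnorm_nonneg[OF To] .
  have b0: "?b \<ge> 0" using opnorm_nonneg[OF So] .
  have "\<exists>G\<in>gen_alg V E r s. opnorm V E r s (op_sub (T \<circ> S) G) < \<epsilon>"
    if e: "\<epsilon> > 0" for \<epsilon>
  proof -
    define \<delta> where "\<delta> = min 1 (\<epsilon> / (2 * (?a + ?b + 1)))"
    have d: "\<delta> > 0" using e a0 b0 by (simp add: \<delta>_def)
    have d1: "\<delta> \<le> 1" by (simp add: \<delta>_def)
    have q: "?a + ?b + 1 > 0" using a0 b0 by simp
    have "\<delta> \<le> \<epsilon> / (2 * (?a + ?b + 1))" by (simp add: \<delta>_def)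
    then have "\<delta> * (?a + ?b + 1) \<le> \<epsilon> / (2 * (?a + ?b + 1)) * (?a + ?b + 1)"
      by (rule mult_right_mono) (use q in simp)
    also have "\<dots> = \<epsilon> / 2" using q by (simp add: divide_simps)
    finally have d2: "\<delta> * (?a + ?b + 1) \<le> \<epsilon> / 2" .
    obtain T' where T': "T' \<in> gen_alg V E r s" "opnorm V E r s (op_sub T T') < \<delta>"
      using Tplus_approx[OF T d] by blast
    obtain S' where S': "S' \<in> gen_alg V E r s" "opnorm V E r s (op_sub S S') < \<delta>"
      using Tplus_approx[OF S d] by blast
    have T'o: "is_op V E r s T'" using gen_is_op[OF T'(1)] .
    have S'o: "is_op V E r s S'" using gen_is_op[OF S'(1)] .
    have DTo: "is_op V E r s (op_sub T T')" and DSo: "is_op V E r s (op_sub S S')"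
      by (simp_all add: op_sub_is_op To So T'o S'o)
    have T'eq: "T' = (\<lambda>f w. T f w + (-1) * op_sub T T' f w)" by (simp add: op_sub_def)
    have nT': "opnorm V E r s T' \<le> ?a + \<delta>"
    proof -
      have "opnorm V E r s T' \<le> ?a + cmod (-1::complex) * opnorm V E r s (op_sub T T')"
        by (subst T'eq, rule is_op_comb(2)[OF To DTo])
      then show ?thesis using T'(2) by simp
    qed
    have bd: "l2norm (op_sub (T \<circ> S) (T' \<circ> S') f) \<le> (\<delta> * (?b + ?a + \<delta>)) * l2norm f"
      if f: "f \<in> l2 V E r s" for f
    proof -
      have Sf: "S f \<in> l2 V E r s" using op_l2[OF So f] .
      have S'f: "S' f \<in> l2 V E r s" using op_l2[OF S'o f] .
      have DSf: "op_sub S S' f = (\<lambda>w. S f w + (-1) * S' f w)" by (simp add: op_sub_def)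
      have lin: "T' (op_sub S S' f) = (\<lambda>w. T' (S f) w + (-1) * T' (S' f) w)"
        unfolding DSf by (rule op_lin[OF T'o Sf S'f])
      have eq: "op_sub (T \<circ> S) (T' \<circ> S') f = (\<lambda>w. op_sub T T' (S f) w + 1 * T' (op_sub S S' f) w)"
        by (simp only: lin) (simp add: op_sub_def)
      have "l2norm (op_sub (T \<circ> S) (T' \<circ> S') f) \<le> l2norm (op_sub T T' (S f)) + cmod (1::complex) * l2norm (T' (op_sub S S' f))"
        unfolding eq by (rule l2_comb(2)[OF op_l2[OF DTo Sf] op_l2[OF T'o op_l2[OF DSo f]]])
      also have "\<dots> \<le> opnorm V E r s (op_sub T T') * l2norm (S f) + opnorm V E r s T' * l2norm (op_sub S S' f)"
        by (simp add: add_mono opnorm_bound[OF DTo Sf] opnorm_bound[OF T'o op_l2[OF DSo f]])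
      also have "\<dots> \<le> \<delta> * (?b * l2norm f) + (?a + \<delta>) * (\<delta> * l2norm f)"
      proof (rule add_mono)
        show "opnorm V E r s (op_sub T T') * l2norm (S f) \<le> \<delta> * (?b * l2norm f)"
          by (rule mult_mono) (use T'(2) opnorm_bound[OF So f] d l2norm_nonneg[of "S f"] in auto)
        have "l2norm (op_sub S S' f) \<le> \<delta> * l2norm f"
          by (rule order_trans[OF opnorm_bound[OF DSo f] mult_right_mono[OF less_imp_le[OF S'(2)] l2norm_nonneg]])
        then show "opnorm V E r s T' * l2norm (op_sub S S' f) \<le> (?a + \<delta>) * (\<delta> * l2norm f)"
          by (rule mult_mono[OF nT']) (use a0 d l2norm_nonneg[of "op_sub S S' f"] in auto)
      qed
      also have "\<dots> = (\<delta> * (?b + ?a + \<delta>)) * l2norm f" by (simp add: algebra_simps)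
      finally show ?thesis .
    qed
    have "opnorm V E r s (op_sub (T \<circ> S) (T' \<circ> S')) \<le> \<delta> * (?b + ?a + \<delta>)"
    proof (rule opnorm_le)
      show "0 \<le> \<delta> * (?b + ?a + \<delta>)" by (rule mult_nonneg_nonneg) (use a0 b0 d in linarith)+
    qed (rule bd)
    also have "\<dots> \<le> \<delta> * (?a + ?b + 1)" using d d1 by (intro mult_left_mono) auto
    also have "\<dots> < \<epsilon>" using d2 e by simp
    finally show ?thesis using gen_alg.gen_mult[OF T'(1) S'(1)] by blast
  qed
  then show ?thesis unfolding Tplus_def mem_Collect_eq by (intro conjI is_op_comp[OF To So]) auto
qed

lemma mat1:
  fixes P Q :: "complex^2^2"
  assumes "P$1$2 = 0" "Q$1$2 = 0" "Q ** Q = 0"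
  shows "(P ** Q) ** (P ** Q) = 0"
proof -
  have "(Q**Q)$1$1 = 0" "(Q**Q)$2$2 = 0" using assms(3) by simp_all
  then have "Q$1$1 = 0" "Q$2$2 = 0" using assms(2) by (simp_all add: matrix_matrix_mult_def sum_2)
  then show ?thesis using assms(1,2) by (simp add: matrix_matrix_mult_def sum_2 vec_eq_iff forall_2)
qed
lemma mat2:
  fixes Q :: "complex^2^2"
  assumes "Q$1$2 = 0" "Q$1$1 = 0" "Q$2$2 = 0"
  shows "Q ** Q = 0"
  using assms by (simp add: matrix_matrix_mult_def sum_2 vec_eq_iff forall_2)
lemma mat3:
  fixes P Q :: "complex^2^2"
  assumes "P$1$2 = 0" "Q$1$2 = 0" "Q$1$1 \<noteq> 0"
  shows "P + (\<chi> i j. 1 * ((\<chi> i j. if i = 1 \<and> j = 1 then 1/Q$1$1 else 0) ** Q)$i$j)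
     + (\<chi> i j. -1 * (P ** ((\<chi> i j. if i = 1 \<and> j = 1 then 1/Q$1$1 else 0) ** Q))$i$j) \<noteq> 0"
proof
  assume "P + (\<chi> i j. 1 * ((\<chi> i j. if i = 1 \<and> j = 1 then 1/Q$1$1 else 0) ** Q)$i$j)
     + (\<chi> i j. -1 * (P ** ((\<chi> i j. if i = 1 \<and> j = 1 then 1/Q$1$1 else 0) ** Q))$i$j) = 0"
  then have "(P + (\<chi> i j. 1 * ((\<chi> i j. if i = 1 \<and> j = 1 then 1/Q$1$1 else 0) ** Q)$i$j)
     + (\<chi> i j. -1 * (P ** ((\<chi> i j. if i = 1 \<and> j = 1 then 1/Q$1$1 else 0) ** Q))$i$j))$1$1 = 0" by simp
  then show False using assms by (simp add: matrix_matrix_mult_def sum_2)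
qed
lemma mat4:
  fixes P Q :: "complex^2^2"
  assumes "P$1$2 = 0" "Q$1$2 = 0" "Q$2$2 \<noteq> 0"
  shows "P + (\<chi> i j. 1 * ((\<chi> i j. if i = 2 \<and> j = 2 then 1/Q$2$2 else 0) ** Q)$i$j)
     + (\<chi> i j. -1 * (P ** ((\<chi> i j. if i = 2 \<and> j = 2 then 1/Q$2$2 else 0) ** Q))$i$j) \<noteq> 0"
proof
  assume "P + (\<chi> i j. 1 * ((\<chi> i j. if i = 2 \<and> j = 2 then 1/Q$2$2 else 0) ** Q)$i$j)
     + (\<chi> i j. -1 * (P ** ((\<chi> i j. if i = 2 \<and> j = 2 then 1/Q$2$2 else 0) ** Q))$i$j) = 0"
  then have "(P + (\<chi> i j. 1 * ((\<chi> i j. if i = 2 \<and> j = 2 then 1/Q$2$2 else 0) ** Q)$i$j)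
     + (\<chi> i j. -1 * (P ** ((\<chi> i j. if i = 2 \<and> j = 2 then 1/Q$2$2 else 0) ** Q))$i$j))$2$2 = 0" by simp
  then show False using assms by (simp add: matrix_matrix_mult_def sum_2)
qed

lemma rep_facts:
  assumes p: "\<pi> \<in> rep_xy V E r s x y"
  shows "\<And>X Y c. X \<in> Tplus V E r s \<Longrightarrow> Y \<in> Tplus V E r s \<Longrightarrow>
            \<pi> (op_add X (op_smult c Y)) = \<pi> X + (\<chi> i j. c * \<pi> Y $ i $ j)"
    and "\<And>X Y. X \<in> Tplus V E r s \<Longrightarrow> Y \<in> Tplus V E r s \<Longrightarrow> \<pi> (X \<circ> Y) = \<pi> X ** \<pi> Y"
    and "\<And>X. X \<in> Tplus V E r s \<Longrightarrow> \<pi> X $ 1 $ 2 = 0"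
    and "\<And>M. M $ 1 $ 2 = 0 \<Longrightarrow> \<exists>B\<in>Tplus V E r s. \<pi> B = M"
proof -
  have n: "nest_rep V E r s \<pi>" using p unfolding rep_xy_def by blast
  show "\<And>X Y c. X \<in> Tplus V E r s \<Longrightarrow> Y \<in> Tplus V E r s \<Longrightarrow>
            \<pi> (op_add X (op_smult c Y)) = \<pi> X + (\<chi> i j. c * \<pi> Y $ i $ j)"
    using n unfolding nest_rep_def by blast
  show "\<And>X Y. X \<in> Tplus V E r s \<Longrightarrow> Y \<in> Tplus V E r s \<Longrightarrow> \<pi> (X \<circ> Y) = \<pi> X ** \<pi> Y"
    using n unfolding nest_rep_def by blast
  have img: "\<pi> ` Tplus V E r s = AlgN" using n unfolding nest_rep_def by blast
  show "\<And>X. X \<in> Tplus V E r s \<Longrightarrow> \<pi> X $ 1 $ 2 = 0"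
  proof -
    fix X assume "X \<in> Tplus V E r s"
    then have "\<pi> X \<in> AlgN" using img by blast
    then show "\<pi> X $ 1 $ 2 = 0" by (simp add: AlgN_def)
  qed
  show "\<And>M. M $ 1 $ 2 = 0 \<Longrightarrow> \<exists>B\<in>Tplus V E r s. \<pi> B = M"
  proof -
    fix M :: "complex^2^2" assume "M $ 1 $ 2 = 0"
    then have "M \<in> \<pi> ` Tplus V E r s" using img by (simp add: AlgN_def)
    then show "\<exists>B\<in>Tplus V E r s. \<pi> B = M" by (metis imageE)
  qed
qed

theorem proposition2p7:
  fixes V :: "'v set" and E :: "'e set" and r s :: "'e \<Rightarrow> 'v" and x y :: 'v
    and A :: "('v,'e) op"
  assumes "countable_digraph V E r s"
    and "x \<in> V" and "y \<in> V" and "x \<noteq> y"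
    and "A \<in> Tplus V E r s"
  shows "in_rad_quot (Tplus V E r s) (Kxy V E r s x y) A \<longleftrightarrow>
         (\<forall>\<pi>\<in>rep_xy V E r s x y. \<pi> A ** \<pi> A = 0)"
proof
  have A: "A \<in> Tplus V E r s" by fact
  assume rad: "in_rad_quot (Tplus V E r s) (Kxy V E r s x y) A"
  show "\<forall>\<pi>\<in>rep_xy V E r s x y. \<pi> A ** \<pi> A = 0"
  proof
    fix \<pi> assume p: "\<pi> \<in> rep_xy V E r s x y"
    note lin = rep_facts(1)[OF p] and mul = rep_facts(2)[OF p]
      and tri = rep_facts(3)[OF p] and sur = rep_facts(4)[OF p]
    have key: "\<exists>C\<in>Tplus V E r s. \<pi> C + (\<chi> i j. 1 * (\<pi> B ** \<pi> A) $ i $ j)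
        + (\<chi> i j. -1 * (\<pi> C ** (\<pi> B ** \<pi> A)) $ i $ j) = 0"
      if B: "B \<in> Tplus V E r s" for B
    proof -
      obtain C where C: "C \<in> Tplus V E r s"
        and D: "op_sub (op_add C (B \<circ> A)) (C \<circ> (B \<circ> A)) \<in> Kxy V E r s x y"
        using rad B unfolding in_rad_quot_def by blast
      define Z where "Z = B \<circ> A"
      have Z: "Z \<in> Tplus V E r s" unfolding Z_def by (rule Tplus_comp[OF B A])
      have Xeq: "op_add C (op_smult 1 Z) = (\<lambda>f w. C f w + 1 * Z f w)"
        by (simp add: op_add_def op_smult_def)
      have X: "op_add C (op_smult 1 Z) \<in> Tplus V E r s" unfolding Xeq by (rule Tplus_comb[OF C Z])
      have W: "C \<circ> Z \<in> Tplus V E r s" by (rule Tplus_comp[OF C Z])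
      have Deq: "op_sub (op_add C (B \<circ> A)) (C \<circ> (B \<circ> A)) = op_add (op_add C (op_smult 1 Z)) (op_smult (-1) (C \<circ> Z))"
        unfolding Z_def by (simp add: op_sub_def op_add_def op_smult_def)
      have "0 = \<pi> (op_sub (op_add C (B \<circ> A)) (C \<circ> (B \<circ> A)))"
        using D p unfolding Kxy_def by auto
      also have "\<dots> = \<pi> C + (\<chi> i j. 1 * (\<pi> B ** \<pi> A) $ i $ j)
        + (\<chi> i j. -1 * (\<pi> C ** (\<pi> B ** \<pi> A)) $ i $ j)"
        unfolding Deq lin[OF X W] lin[OF C Z] mul[OF C Z] unfolding Z_def mul[OF B A] ..
      finally show ?thesis using C by metis
    qed
    have a: "\<pi> A $ 1 $ 1 = 0"
    proof (rule ccontr)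
      assume a: "\<pi> A $ 1 $ 1 \<noteq> 0"
      obtain B where B: "B \<in> Tplus V E r s" "\<pi> B = (\<chi> i j. if i = 1 \<and> j = 1 then 1/\<pi> A$1$1 else 0)"
        using sur[of "\<chi> i j. if i = 1 \<and> j = 1 then 1/\<pi> A$1$1 else 0"] by auto
      obtain C where C: "C \<in> Tplus V E r s" "\<pi> C + (\<chi> i j. 1 * (\<pi> B ** \<pi> A) $ i $ j)
        + (\<chi> i j. -1 * (\<pi> C ** (\<pi> B ** \<pi> A)) $ i $ j) = 0" using key[OF B(1)] by blast
      show False using mat3[OF tri[OF C(1)] tri[OF A] a] C(2) unfolding B(2) by blast
    qed
    have d: "\<pi> A $ 2 $ 2 = 0"
    proof (rule ccontr)
      assume d: "\<pi> A $ 2 $ 2 \<noteq> 0"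
      obtain B where B: "B \<in> Tplus V E r s" "\<pi> B = (\<chi> i j. if i = 2 \<and> j = 2 then 1/\<pi> A$2$2 else 0)"
        using sur[of "\<chi> i j. if i = 2 \<and> j = 2 then 1/\<pi> A$2$2 else 0"] by auto
      obtain C where C: "C \<in> Tplus V E r s" "\<pi> C + (\<chi> i j. 1 * (\<pi> B ** \<pi> A) $ i $ j)
        + (\<chi> i j. -1 * (\<pi> C ** (\<pi> B ** \<pi> A)) $ i $ j) = 0" using key[OF B(1)] by blast
      show False using mat4[OF tri[OF C(1)] tri[OF A] d] C(2) unfolding B(2) by blast
    qed
    show "\<pi> A ** \<pi> A = 0" by (rule mat2[OF tri[OF A] a d])
  qed
next
  have A: "A \<in> Tplus V E r s" by fact
  assume H: "\<forall>\<pi>\<in>rep_xy V E r s x y. \<pi> A ** \<pi> A = 0"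
  show "in_rad_quot (Tplus V E r s) (Kxy V E r s x y) A"
    unfolding in_rad_quot_def
  proof
    fix B assume B: "B \<in> Tplus V E r s"
    define Z where "Z = B \<circ> A"
    have Z: "Z \<in> Tplus V E r s" unfolding Z_def by (rule Tplus_comp[OF B A])
    define C where "C = (\<lambda>f w. Z f w + (-2) * Z f w)"
    have C: "C \<in> Tplus V E r s" unfolding C_def by (rule Tplus_comb[OF Z Z])
    have Deq: "op_sub (op_add C (B \<circ> A)) (C \<circ> (B \<circ> A)) = Z \<circ> Z"
      unfolding Z_def[symmetric] by (auto simp: op_sub_def op_add_def C_def algebra_simps)
    have ZZ: "Z \<circ> Z \<in> Tplus V E r s" by (rule Tplus_comp[OF Z Z])
    have "\<pi> (Z \<circ> Z) = 0" if p: "\<pi> \<in> rep_xy V E r s x y" for \<pi>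
    proof -
      have "\<pi> (Z \<circ> Z) = (\<pi> B ** \<pi> A) ** (\<pi> B ** \<pi> A)"
        unfolding rep_facts(2)[OF p Z Z] unfolding Z_def rep_facts(2)[OF p B A] ..
      also have "\<dots> = 0" by (rule mat1[OF rep_facts(3)[OF p B] rep_facts(3)[OF p A]]) (use H p in blast)
      finally show ?thesis .
    qed
    then have "Z \<circ> Z \<in> Kxy V E r s x y" unfolding Kxy_def using ZZ by blast
    then show "\<exists>C\<in>Tplus V E r s. op_sub (op_add C (B \<circ> A)) (C \<circ> (B \<circ> A)) \<in> Kxy V E r s x y"
      using C Deq by metis
  qed
qed

end
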